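(* Let $\Gamma$ be a cycle graph (a connected metric graph all of whose vertices have degree two) whose edge lengths are natural numbers $L(e)$, $e\in\mathcal E$, with $\gcd\{L(e):e\in\mathcal E\}=1$ and with $\widetilde E:=\sum_{e\in\mathcal E}L(e)$ odd. Then $$\lambda_{\widetilde E+1}\big(L^{\rm st}(\Gamma)\big)>\lambda_{\widetilde E}\big(L^{\rm D}(\Gamma)\big),$$ i.e. the inequality $\lambda_{n+1}(L^{\rm st}(\Gamma))\le\lambda_n(L^{\rm D}(\Gamma))$ fails for $n=\widetilde E$.
   Context: A finite compact metric graph $\Gamma$ consists of finitely many edges $e_n=[x_{2n-1},x_{2n}]\subset\mathbb R$ of positive lengths $L(e_n)$ and a vertex set $\mathcal V$ which is a partition of the set of all edge endpoints; $\mathcal E$ is the edge set; the degree of a vertex is the number of endpoints it contains. $f(x_j)$ denotes the limit of $f$ at endpoint $x_j$, and $\partial f(x_j)=f'(x_j)$ if $x_j$ is a left endpoint, $-f'(x_j)$ if a right endpoint. The standard Laplacian $L^{\rm st}(\Gamma)$ acts as $-f''$ on each edge with domain all $f\in W^2_2(\Gamma\setminus\mathcal V)=\bigoplus_nW^2_2(e_n)$ with, at every vertex $v$, $f(x_i)=f(x_j)$ for $x_i,x_j\in v$ and $\sum_{x_j\in v}\partial f(x_j)=0$. The Dirichlet Laplacian $L^{\rm D}(\Gamma)$ acts as $-f''$ with domain all $f\in W^2_2(\Gamma\setminus\mathcal V)$ with $f(x_j)=0$ at every endpoint $x_j$. Eigenvalues $\lambda_1\le\lambda_2\le\dots$ are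 counted with multiplicities. *)

theory Defs
  imports "HOL-Analysis.Analysis"
begin

text \<open>Edge i is modelled as the interval
  [0, L i]; its endpoints are (i, False) (left endpoint, at 0) and (i, True)
  (right endpoint, at L i). The vertex set V is a partition of the set of endpoints.\<close>

definition metric_graph :: "nat \<Rightarrow> (nat \<Rightarrow> real) \<Rightarrow> (nat \<times> bool) set set \<Rightarrow> bool" where
  "metric_graph m L V \<longleftrightarrow>
     (\<forall>i<m. L i > 0) \<and>
     (\<forall>v\<in>V. v \<noteq> {}) \<and>
     (\<forall>v\<in>V. \<forall>w\<in>V. v \<noteq> w \<longrightarrow> v \<inter> w = {}) \<and>
     \<Union>V = {..<m} \<times> (UNIV :: bool set)"

definition vdegree :: "(nat \<times> bool) set \<Rightarrow> nat" where
  "vdegree v = card v"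

definition edge_adj :: "nat \<Rightarrow> (nat \<times> bool) set set \<Rightarrow> (nat \<times> nat) set" where
  "edge_adj m V = {(i, j). i < m \<and> j < m \<and> (\<exists>v\<in>V. \<exists>a b. (i, a) \<in> v \<and> (j, b) \<in> v)}"

definition graph_connected :: "nat \<Rightarrow> (nat \<times> bool) set set \<Rightarrow> bool" where
  "graph_connected m V \<longleftrightarrow> (\<forall>i<m. \<forall>j<m. (i, j) \<in> (edge_adj m V)\<^sup>*)"

definition cycle_graph :: "nat \<Rightarrow> (nat \<Rightarrow> real) \<Rightarrow> (nat \<times> bool) set set \<Rightarrow> bool" where
  "cycle_graph m L V \<longleftrightarrow> metric_graph m L V \<and> graph_connected m V \<and> (\<forall>v\<in>V. vdegree v = 2)"

text \<open>Value f(x_j) and normal derivative \<partial>f(x_j) at an endpoint.\<close>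
definition ep_val :: "(nat \<Rightarrow> real) \<Rightarrow> (nat \<Rightarrow> real \<Rightarrow> real) \<Rightarrow> nat \<times> bool \<Rightarrow> real" where
  "ep_val L f p = (if snd p then f (fst p) (L (fst p)) else f (fst p) 0)"

definition ep_der :: "(nat \<Rightarrow> real) \<Rightarrow> (nat \<Rightarrow> real \<Rightarrow> real) \<Rightarrow> nat \<times> bool \<Rightarrow> real" where
  "ep_der L f' p = (if snd p then - f' (fst p) (L (fst p)) else f' (fst p) 0)"

definition edge_ode :: "nat \<Rightarrow> (nat \<Rightarrow> real) \<Rightarrow> real \<Rightarrow> (nat \<Rightarrow> real \<Rightarrow> real) \<Rightarrow> (nat \<Rightarrow> real \<Rightarrow> real) \<Rightarrow> bool" where
  "edge_ode m L lam f f' \<longleftrightarrow>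
     (\<forall>i<m. \<forall>x\<in>{0..L i}.
        (f i has_real_derivative f' i x) (at x within {0..L i}) \<and>
        (f' i has_real_derivative (- lam * f i x)) (at x within {0..L i}))"

definition st_eigenfunction :: "nat \<Rightarrow> (nat \<Rightarrow> real) \<Rightarrow> (nat \<times> bool) set set \<Rightarrow> real \<Rightarrow> (nat \<Rightarrow> real \<Rightarrow> real) \<Rightarrow> bool" where
  "st_eigenfunction m L V lam f \<longleftrightarrow>
     (\<exists>f'. edge_ode m L lam f f' \<and>
        (\<forall>v\<in>V. \<forall>p\<in>v. \<forall>q\<in>v. ep_val L f p = ep_val L f q) \<and>
        (\<forall>v\<in>V. (\<Sum>p\<in>v. ep_der L f' p) = 0))"

definition dir_eigenfunction :: "nat \<Rightarrow> (nat \<Rightarrow> real) \<Rightarrow> real \<Rightarrow> (nat \<Rightarrow> real \<Rightarrow> real) \<Rightarrow> bool" where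
  "dir_eigenfunction m L lam f \<longleftrightarrow>
     (\<exists>f'. edge_ode m L lam f f' \<and> (\<forall>i<m. f i 0 = 0 \<and> f i (L i) = 0))"

definition lin_indep_on :: "nat \<Rightarrow> (nat \<Rightarrow> real) \<Rightarrow> nat \<Rightarrow> (nat \<Rightarrow> nat \<Rightarrow> real \<Rightarrow> real) \<Rightarrow> bool" where
  "lin_indep_on m L k fs \<longleftrightarrow>
     (\<forall>c :: nat \<Rightarrow> real. (\<forall>i<m. \<forall>x\<in>{0..L i}. (\<Sum>j<k. c j * fs j i x) = 0) \<longrightarrow> (\<forall>j<k. c j = 0))"

text \<open>n-th eigenvalue (1-based, counted with multiplicity): the least t such that there are
  n linearly independent eigenfunctions with eigenvalues \<le> t.\<close>
definition st_eigenvalue :: "nat \<Rightarrow> (nat \<Rightarrow> real) \<Rightarrow> (nat \<times> bool) set set \<Rightarrow> nat \<Rightarrow> real" where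
  "st_eigenvalue m L V n = Inf {t. \<exists>fs \<mu>.
      (\<forall>j<n. \<mu> j \<le> t \<and> st_eigenfunction m L V (\<mu> j) (fs j)) \<and> lin_indep_on m L n fs}"

definition dir_eigenvalue :: "nat \<Rightarrow> (nat \<Rightarrow> real) \<Rightarrow> nat \<Rightarrow> real" where
  "dir_eigenvalue m L n = Inf {t. \<exists>fs \<mu>.
      (\<forall>j<n. \<mu> j \<le> t \<and> dir_eigenfunction m L (\<mu> j) (fs j)) \<and> lin_indep_on m L n fs}"

end

theory Submission
  imports Defs
begin

definition eode :: "real \<Rightarrow> real \<Rightarrow> (real\<Rightarrow>real) \<Rightarrow> (real\<Rightarrow>real) \<Rightarrow> bool" where
"eode L mu g g' \<longleftrightarrow> (\<forall>x\<in>{0..L}. (g has_real_derivative g' x) (at x within {0..L}) \<and>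
     (g' has_real_derivative (- mu * g x)) (at x within {0..L}))"

lemma edge_ode_eode: "edge_ode m L mu f f' \<longleftrightarrow> (\<forall>i<m. eode (L i) mu (f i) (f' i))"
  unfolding edge_ode_def eode_def by blast

lemma const_on:
  assumes "\<And>x. x\<in>{0..L} \<Longrightarrow> (h has_real_derivative 0) (at x within {0..L::real})"
    and "x\<in>{0..L}" "y\<in>{0..L}"
  shows "h x = h y"
proof -
  obtain c where "\<forall>x\<in>{0..L}. h x = c"
    using has_field_derivative_zero_constant[of "{0..L}" h] assms(1) by auto
  thus ?thesis using assms by auto
qed

lemma eode_pos:
  assumes "eode L mu g g'" "mu > 0" "x \<in> {0..L}"
  shows "g' x * cos (sqrt mu * x) + sqrt mu * g x * sin (sqrt mu * x) = g' 0"
    and "sqrt mu * g x * cos (sqrt mu * x) - g' x * sin (sqrt mu * x) = sqrt mu * g 0"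
proof -
  define w where "w = sqrt mu"
  have ww: "w * w = mu" using assms(2) unfolding w_def by (simp add: real_sqrt_mult_self)
  have L0: "0 \<le> L" using assms(3) by auto
  have d1: "((\<lambda>x. g' x * cos (w * x) + w * g x * sin (w * x)) has_real_derivative 0) (at x within {0..L})"
    if "x \<in> {0..L}" for x
  proof -
    have a: "(g has_real_derivative g' x) (at x within {0..L})" "(g' has_real_derivative (- mu * g x)) (at x within {0..L})"
      using assms(1) that unfolding eode_def by auto
    show ?thesis
      by (rule derivative_eq_intros a | simp)+ (simp add: ww[symmetric] algebra_simps)
  qed
  have d2: "((\<lambda>x. w * g x * cos (w * x) - g' x * sin (w * x)) has_real_derivative 0) (at x within {0..L})"
    if "x \<in> {0..L}" for x
  proof -
    have a: "(g has_real_derivative g' x) (at x within {0..L})" "(g' has_real_derivative (- mu * g x)) (at x within {0..L})"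
      using assms(1) that unfolding eode_def by auto
    show ?thesis
      by (rule derivative_eq_intros a | simp)+ (simp add: ww[symmetric] algebra_simps)
  qed
  show "g' x * cos (sqrt mu * x) + sqrt mu * g x * sin (sqrt mu * x) = g' 0"
    using const_on[OF d1 assms(3), of 0] L0 unfolding w_def by simp
  show "sqrt mu * g x * cos (sqrt mu * x) - g' x * sin (sqrt mu * x) = sqrt mu * g 0"
    using const_on[OF d2 assms(3), of 0] L0 unfolding w_def by simp
qed

lemma eode_zero:
  assumes "eode L 0 g g'" "x \<in> {0..L}"
  shows "g' x = g' 0" and "g x = g 0 + g' 0 * x"
proof -
  have L0: "0 \<le> L" using assms(2) by auto
  have d1: "(g' has_real_derivative 0) (at x within {0..L})" if "x \<in> {0..L}" for x
    using assms(1) that unfolding eode_def by auto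
  show e: "g' x = g' 0" using const_on[OF d1 assms(2), of 0] L0 by simp
  have d2: "((\<lambda>x. g x - g' 0 * x) has_real_derivative 0) (at x within {0..L})" if "x \<in> {0..L}" for x
  proof -
    have a: "(g has_real_derivative g' x) (at x within {0..L})" using assms(1) that unfolding eode_def by auto
    have "g' x = g' 0" using const_on[OF d1 that, of 0] L0 by simp
    moreover have "((\<lambda>x. g x - g' 0 * x) has_real_derivative (g' x - g' 0)) (at x within {0..L})"
      by (auto intro!: derivative_eq_intros a)
    ultimately show ?thesis by simp
  qed
  show "g x = g 0 + g' 0 * x" using const_on[OF d2 assms(2), of 0] L0 by simp
qed

lemma eode_neg:
  assumes "eode L mu g g'" "mu < 0" "x \<in> {0..L}"
  shows "(g' x + sqrt (-mu) * g x) * exp (- (sqrt (-mu) * x)) = g' 0 + sqrt (-mu) * g 0"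
    and "(g' x - sqrt (-mu) * g x) * exp (sqrt (-mu) * x) = g' 0 - sqrt (-mu) * g 0"
proof -
  define k where "k = sqrt (-mu)"
  have kk: "k * k = - mu" using assms(2) unfolding k_def by (simp add: real_sqrt_mult_self)
  have L0: "0 \<le> L" using assms(3) by auto
  have d1: "((\<lambda>x. (g' x + k * g x) * exp (- (k * x))) has_real_derivative 0) (at x within {0..L})"
    if "x \<in> {0..L}" for x
  proof -
    have a: "(g has_real_derivative g' x) (at x within {0..L})" "(g' has_real_derivative (- mu * g x)) (at x within {0..L})"
      using assms(1) that unfolding eode_def by auto
    have mu_eq: "mu = - (k*k)" using kk by simp
    show ?thesis
      by (rule derivative_eq_intros a | simp)+ (simp add: algebra_simps mu_eq)
  qed
  have d2: "((\<lambda>x. (g' x - k * g x) * exp (k * x)) has_real_derivative 0) (at x within {0..L})"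
    if "x \<in> {0..L}" for x
  proof -
    have a: "(g has_real_derivative g' x) (at x within {0..L})" "(g' has_real_derivative (- mu * g x)) (at x within {0..L})"
      using assms(1) that unfolding eode_def by auto
    have mu_eq: "mu = - (k*k)" using kk by simp
    show ?thesis
      by (rule derivative_eq_intros a | simp)+ (simp add: algebra_simps mu_eq)
  qed
  show "(g' x + sqrt (-mu) * g x) * exp (- (sqrt (-mu) * x)) = g' 0 + sqrt (-mu) * g 0"
    using const_on[OF d1 assms(3), of 0] L0 unfolding k_def by simp
  show "(g' x - sqrt (-mu) * g x) * exp (sqrt (-mu) * x) = g' 0 - sqrt (-mu) * g 0"
    using const_on[OF d2 assms(3), of 0] L0 unfolding k_def by simp
qed

lemma eode_vanish0:
  assumes "eode L mu g g'" "0 \<le> L" "g 0 = 0" "g' 0 = 0" "x\<in>{0..L}"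
  shows "g x = 0"
proof -
  consider "mu > 0" | "mu = 0" | "mu < 0" by linarith
  then show ?thesis
  proof cases
    case 1
    define w where "w = sqrt mu"
    have w0: "w > 0" using 1 unfolding w_def by simp
    have A: "g' x * cos (w * x) + w * g x * sin (w * x) = 0"
      using eode_pos(1)[OF assms(1) 1 assms(5)] assms unfolding w_def by simp
    have B: "w * g x * cos (w * x) - g' x * sin (w * x) = 0"
      using eode_pos(2)[OF assms(1) 1 assms(5)] assms unfolding w_def by simp
    have "w * g x = (w * g x * cos (w * x) - g' x * sin (w * x)) * cos (w * x)
         + (g' x * cos (w * x) + w * g x * sin (w * x)) * sin (w * x)"
      by (simp add: algebra_simps) (metis mult.assoc distrib_left mult_1_right sin_cos_squared_add2 power2_eq_square add.commute)
    with A B have "w * g x = 0" by simp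
    thus ?thesis using w0 by simp
  next
    case 2
    thus ?thesis using eode_zero[of L g g' x] assms by simp
  next
    case 3
    define k where "k = sqrt (-mu)"
    have k0: "k > 0" using 3 unfolding k_def by simp
    have A: "(g' x + k * g x) * exp (- (k * x)) = 0"
      using eode_neg(1)[OF assms(1) 3 assms(5)] assms unfolding k_def by simp
    have B: "(g' x - k * g x) * exp (k * x) = 0"
      using eode_neg(2)[OF assms(1) 3 assms(5)] assms unfolding k_def by simp
    have "g' x + k * g x = 0" "g' x - k * g x = 0" using A B by auto
    hence "k * g x = 0" by linarith
    thus ?thesis using k0 by simp
  qed
qed

lemma eode_vanishL:
  assumes "eode L mu g g'" "0 \<le> L" "g L = 0" "g' L = 0"
  shows "g 0 = 0 \<and> g' 0 = 0"
proof -
  have xL: "L \<in> {0..L}" using assms(2) by simp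
  consider "mu > 0" | "mu = 0" | "mu < 0" by linarith
  then show ?thesis
  proof cases
    case 1
    have "g' 0 = 0" "sqrt mu * g 0 = 0"
      using eode_pos[OF assms(1) 1 xL] assms by simp_all
    thus ?thesis using 1 by simp
  next
    case 2
    thus ?thesis using eode_zero[OF _ xL, of g g'] assms by simp
  next
    case 3
    have "g' 0 + sqrt (-mu) * g 0 = 0" "g' 0 - sqrt (-mu) * g 0 = 0"
      using eode_neg[OF assms(1) 3 xL] assms by simp_all
    hence "sqrt (-mu) * g 0 = 0" "g' 0 = 0" by linarith+
    thus ?thesis using 3 by simp
  qed
qed

lemma eode_vanish:
  assumes "eode L mu g g'" "0 \<le> L" "(g 0 = 0 \<and> g' 0 = 0) \<or> (g L = 0 \<and> g' L = 0)" "x\<in>{0..L}"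
  shows "g x = 0"
  using assms eode_vanish0[OF assms(1,2) _ _ assms(4)] eode_vanishL[OF assms(1,2)] by blast


locale cyc =
  fixes m :: nat and L :: "nat \<Rightarrow> real" and V :: "(nat \<times> bool) set set"
  assumes cg: "cycle_graph m L V" and m_pos: "0 < m"
begin

definition PP :: "(nat \<times> bool) set" where "PP = {..<m} \<times> (UNIV :: bool set)"
definition vx :: "nat \<times> bool \<Rightarrow> (nat \<times> bool) set" where "vx p = (THE v. v \<in> V \<and> p \<in> v)"
definition sig :: "nat \<times> bool \<Rightarrow> nat \<times> bool" where "sig p = (THE q. q \<in> vx p \<and> q \<noteq> p)"
definition tau :: "nat \<times> bool \<Rightarrow> nat \<times> bool" where "tau p = (fst p, \<not> snd p)"
definition rho :: "nat \<times> bool \<Rightarrow> nat \<times> bool" where "rho p = sig (tau p)"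
definition p0 :: "nat \<times> bool" where "p0 = (0, False)"
definition Orb :: "(nat \<times> bool) set" where "Orb = range (\<lambda>n. (rho ^^ n) p0)"

lemma mg: "metric_graph m L V" using cg unfolding cycle_graph_def by simp
lemma Lpos: "i < m \<Longrightarrow> L i > 0" using mg unfolding metric_graph_def by simp
lemma UV: "\<Union>V = PP" using mg unfolding metric_graph_def PP_def by simp
lemma disj: "v \<in> V \<Longrightarrow> w \<in> V \<Longrightarrow> v \<noteq> w \<Longrightarrow> v \<inter> w = {}" using mg unfolding metric_graph_def by simp
lemma deg2: "v \<in> V \<Longrightarrow> card v = 2" using cg unfolding cycle_graph_def vdegree_def by simp

lemma finite_PP: "finite PP" unfolding PP_def by simp

lemma vx_unique: "v \<in> V \<Longrightarrow> p \<in> v \<Longrightarrow> vx p = v"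
  unfolding vx_def
  apply (rule the_equality)
  using disj by auto

lemma vx: "p \<in> PP \<Longrightarrow> vx p \<in> V \<and> p \<in> vx p"
proof -
  assume "p \<in> PP"
  then obtain v where "v \<in> V" "p \<in> v" using UV by auto
  thus ?thesis using vx_unique by auto
qed

lemma sig: "p \<in> PP \<Longrightarrow> vx p = {p, sig p} \<and> sig p \<noteq> p"
proof -
  assume p: "p \<in> PP"
  have "card (vx p) = 2" using vx[OF p] deg2 by auto
  then obtain a b where ab: "vx p = {a,b}" "a \<noteq> b" by (auto simp: card_2_iff)
  have pin: "p \<in> vx p" using vx[OF p] by auto
  obtain q where q: "vx p = {p, q}" "q \<noteq> p"
  proof (cases "p = a")
    case True thus ?thesis using that ab by blast
  next
    case False hence "p = b" using ab pin by blast
    thus ?thesis using that[of a] ab by (simp add: insert_commute)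
  qed
  have "sig p = q" unfolding sig_def
    apply (rule the_equality) using q by auto
  thus ?thesis using q by auto
qed

lemma sig_PP: "p \<in> PP \<Longrightarrow> sig p \<in> PP"
  using sig[of p] vx[of p] UV by blast

lemma sig_sig: "p \<in> PP \<Longrightarrow> sig (sig p) = p"
proof -
  assume p: "p \<in> PP"
  have "vx (sig p) = vx p" using vx[OF p] sig[OF p] vx_unique by auto
  hence "{sig p, sig (sig p)} = {p, sig p}" using sig[OF p] sig[OF sig_PP[OF p]] by auto
  thus ?thesis using sig[OF sig_PP[OF p]] by (metis doubleton_eq_iff)
qed

lemma tau_PP: "p \<in> PP \<Longrightarrow> tau p \<in> PP" unfolding tau_def PP_def by auto
lemma tau_tau[simp]: "tau (tau p) = p" unfolding tau_def by simp
lemma tau_neq: "tau p \<noteq> p" unfolding tau_def by (cases p) auto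
lemma fst_tau[simp]: "fst (tau p) = fst p" unfolding tau_def by simp

lemma rho_PP: "p \<in> PP \<Longrightarrow> rho p \<in> PP" unfolding rho_def using sig_PP tau_PP by blast

lemma rho_inj: "inj_on rho PP"
  unfolding inj_on_def rho_def by (metis sig_sig tau_PP tau_tau)

lemma funpow_PP: "p \<in> PP \<Longrightarrow> (rho ^^ n) p \<in> PP"
  by (induction n) (auto simp: rho_PP)

lemma funpow_inj: "p \<in> PP \<Longrightarrow> q \<in> PP \<Longrightarrow> (rho ^^ n) p = (rho ^^ n) q \<Longrightarrow> p = q"
proof (induction n)
  case 0 thus ?case by simp
next
  case (Suc n)
  thus ?case using rho_inj funpow_PP unfolding inj_on_def by auto
qed

lemma p0_PP: "p0 \<in> PP" unfolding p0_def PP_def using m_pos by simp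

lemma period: "\<exists>d>0. (rho ^^ d) p0 = p0"
proof -
  have "\<not> inj_on (\<lambda>n. (rho ^^ n) p0) {..card PP}"
  proof
    assume "inj_on (\<lambda>n. (rho ^^ n) p0) {..card PP}"
    moreover have "(\<lambda>n. (rho ^^ n) p0) ` {..card PP} \<subseteq> PP" using funpow_PP[OF p0_PP] by blast
    ultimately have "card {..card PP} \<le> card PP" using card_inj_on_le finite_PP by blast
    thus False by simp
  qed
  then obtain a b where ab: "a \<noteq> b" "(rho ^^ a) p0 = (rho ^^ b) p0"
    unfolding inj_on_def by auto
  { fix a b assume "a < b" "(rho ^^ a) p0 = (rho ^^ b) p0"
    hence "(rho ^^ a) p0 = (rho ^^ a) ((rho ^^ (b - a)) p0)"
      by (metis funpow_add le_add_diff_inverse less_imp_le comp_apply)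
    hence "(rho ^^ (b - a)) p0 = p0" using funpow_inj p0_PP funpow_PP by metis
    hence ?thesis using \<open>a < b\<close> by (intro exI[of _ "b - a"]) auto }
  thus ?thesis using ab by (metis linorder_neqE_nat)
qed

lemma Orb_PP: "Orb \<subseteq> PP" unfolding Orb_def using funpow_PP[OF p0_PP] by blast
lemma finite_Orb: "finite Orb" using Orb_PP finite_PP finite_subset by blast
lemma p0_Orb: "p0 \<in> Orb" unfolding Orb_def by (rule range_eqI[of _ _ 0]) simp
lemma rho_Orb: "p \<in> Orb \<Longrightarrow> rho p \<in> Orb"
proof -
  assume "p \<in> Orb"
  then obtain n where "p = (rho^^n) p0" unfolding Orb_def by blast
  hence "rho p = (rho^^Suc n) p0" by simp
  thus ?thesis unfolding Orb_def by blast
qed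

lemma bij_rho_Orb: "bij_betw rho Orb Orb"
proof -
  have "inj_on rho Orb" using rho_inj Orb_PP inj_on_subset by blast
  moreover have "rho ` Orb \<subseteq> Orb" using rho_Orb by blast
  ultimately have "rho ` Orb = Orb" using endo_inj_surj[OF finite_Orb] by blast
  moreover have "inj_on rho Orb" using rho_inj Orb_PP inj_on_subset by blast
  ultimately show ?thesis unfolding bij_betw_def by simp
qed

lemma Orb_pred: "q \<in> Orb \<Longrightarrow> \<exists>r\<in>Orb. q = rho r"
  using bij_rho_Orb unfolding bij_betw_def by auto

lemma sig_Orb: "q \<in> Orb \<Longrightarrow> sig q \<in> tau ` Orb"
proof -
  assume "q \<in> Orb"
  then obtain r where r: "r \<in> Orb" "q = rho r" using Orb_pred by blast
  have "r \<in> PP" using r Orb_PP by blast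
  hence "sig q = tau r" using r(2) sig_sig[OF tau_PP[OF \<open>r \<in> PP\<close>]] unfolding rho_def by simp
  thus ?thesis using r by auto
qed

lemma sig_tOrb: "q \<in> tau ` Orb \<Longrightarrow> sig q \<in> Orb"
  using rho_Orb unfolding rho_def by auto

lemma cover: "PP = Orb \<union> tau ` Orb"
proof -
  define C where "C = Orb \<union> tau ` Orb"
  have Ct: "p \<in> C \<Longrightarrow> tau p \<in> C" for p unfolding C_def by (auto simp: image_iff)
  have Cs: "p \<in> C \<Longrightarrow> sig p \<in> C" for p unfolding C_def using sig_Orb sig_tOrb by blast
  have Ce: "(i, b) \<in> C \<Longrightarrow> (i, c) \<in> C" for i b c
    using Ct[of "(i,b)"] by (cases "b = c") (auto simp: tau_def)
  have conn: "(0, i) \<in> (edge_adj m V)\<^sup>*" if "i < m" for i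
    using cg m_pos that unfolding cycle_graph_def graph_connected_def by auto
  have "(i, False) \<in> C" if "i < m" for i
    using conn[OF that]
  proof (induction rule: rtrancl_induct)
    case base thus ?case using p0_Orb unfolding C_def p0_def by auto
  next
    case (step j k)
    then obtain v a b where v: "v \<in> V" "(j,a) \<in> v" "(k,b) \<in> v" unfolding edge_adj_def by auto
    have ja: "(j,a) \<in> C" using Ce step by blast
    have jP: "(j,a) \<in> PP" using v UV by blast
    have "(k,b) \<in> C"
    proof (cases "(k,b) = (j,a)")
      case True thus ?thesis using ja by simp
    next
      case False
      have "vx (j,a) = v" using vx_unique v by auto
      hence "(k,b) = sig (j,a)" using sig[OF jP] v False by auto
      thus ?thesis using Cs ja by simp
    qed
    thus ?case using Ce by blast
  qed
  hence "PP \<subseteq> C" unfolding PP_def using Ce by auto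
  moreover have "C \<subseteq> PP" unfolding C_def using Orb_PP tau_PP by auto
  ultimately show ?thesis unfolding C_def by auto
qed

lemma rtr: "p \<in> PP \<Longrightarrow> rho (tau (rho p)) = tau p"
  unfolding rho_def using sig_sig tau_PP by simp

lemma rtrn: "p \<in> PP \<Longrightarrow> (rho ^^ n) (tau ((rho ^^ n) p)) = tau p"
proof (induction n)
  case 0 thus ?case by simp
next
  case (Suc n)
  have e1: "(rho ^^ Suc n) x = (rho ^^ n) (rho x)" for x by (simp add: funpow_Suc_right del: funpow.simps)
  have "(rho ^^ Suc n) (tau ((rho ^^ Suc n) p)) = (rho ^^ n) (rho (tau (rho ((rho ^^ n) p))))"
    by (simp only: e1[of "tau ((rho ^^ Suc n) p)"]) simp
  also have "\<dots> = (rho ^^ n) (tau ((rho ^^ n) p))" using rtr funpow_PP Suc by simp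
  finally show ?case using Suc by simp
qed

lemma disjoint: "Orb \<inter> tau ` Orb = {}"
proof (rule ccontr)
  assume "Orb \<inter> tau ` Orb \<noteq> {}"
  then obtain x where "x \<in> Orb" "x \<in> tau ` Orb" by blast
  then obtain a b where ab: "(rho ^^ a) p0 = tau ((rho ^^ b) p0)" unfolding Orb_def by blast
  define c where "c = a + b"
  have "(rho ^^ b) ((rho ^^ a) p0) = tau p0" using ab rtrn p0_PP by simp
  moreover have "(rho ^^ b) ((rho ^^ a) p0) = (rho ^^ c) p0" unfolding c_def
    by (subst add.commute) (simp add: funpow_add)
  ultimately have tc: "tau p0 = (rho ^^ c) p0" by simp
  have key: "tau ((rho ^^ n) p0) = (rho ^^ (c - n)) p0" if "n \<le> c" for n
  proof -
    have "(rho ^^ n) (tau ((rho ^^ n) p0)) = (rho ^^ n) ((rho ^^ (c - n)) p0)"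
      using rtrn[OF p0_PP, of n] tc that by (metis funpow_add le_add_diff_inverse comp_apply)
    thus ?thesis using funpow_inj funpow_PP tau_PP p0_PP by metis
  qed
  show False
  proof (cases "even c")
    case True
    then obtain n where "c = 2 * n" by blast
    thus False using key[of n] tau_neq by simp
  next
    case False
    then obtain n where n: "c = 2 * n + 1" using oddE by blast
    have "sig ((rho ^^ Suc n) p0) = tau ((rho ^^ n) p0)"
      using sig_sig tau_PP funpow_PP p0_PP unfolding rho_def by simp
    also have "\<dots> = (rho ^^ Suc n) p0" using key[of n] n by simp
    finally show False using sig funpow_PP p0_PP by metis
  qed
qed

lemma fst_bij: "bij_betw fst Orb {..<m}"
proof -
  have "inj_on fst Orb"
  proof (rule inj_onI)
    fix p q assume pq: "p \<in> Orb" "q \<in> Orb" "fst p = fst q"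
    show "p = q"
    proof (rule ccontr)
      assume "p \<noteq> q"
      hence "q = tau p" using pq unfolding tau_def by (cases p, cases q) auto
      thus False using disjoint pq by auto
    qed
  qed
  moreover have "fst ` Orb = {..<m}"
  proof
    show "fst ` Orb \<subseteq> {..<m}" using Orb_PP unfolding PP_def by auto
    show "{..<m} \<subseteq> fst ` Orb"
    proof
      fix i assume "i \<in> {..<m}"
      hence "(i, False) \<in> Orb \<union> tau ` Orb" using cover unfolding PP_def by auto
      thus "i \<in> fst ` Orb"
      proof
        assume "(i, False) \<in> Orb" thus ?thesis by (rule image_eqI[rotated]) simp
      next
        assume "(i, False) \<in> tau ` Orb"
        then obtain r where r: "r \<in> Orb" "(i, False) = tau r" by blast
        hence "fst r = i" by (metis fst_conv fst_tau)
        thus ?thesis using r by blast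
      qed
    qed
  qed
  ultimately show ?thesis unfolding bij_betw_def by simp
qed

lemma sum_Orb: "(\<Sum>p\<in>Orb. h (fst p)) = (\<Sum>i<m. h i)"
  using sum.reindex_bij_betw[OF fst_bij, of h] by simp

lemma prod_Orb: "(\<Prod>p\<in>Orb. h (fst p)) = (\<Prod>i<m. h i)"
  using prod.reindex_bij_betw[OF fst_bij, of h] by simp

lemma edge_in_Orb: "i < m \<Longrightarrow> \<exists>b. (i, b) \<in> Orb"
  using fst_bij unfolding bij_betw_def by (metis fst_conv imageE lessThan_iff prod.collapse)

end

lemma prod_cis: "(\<Prod>i<(n::nat). cis (a i)) = cis (\<Sum>i<n. a i)"
  by (induction n) (simp_all add: cis_mult)

context cyc begin

definition stef :: "real \<Rightarrow> (nat \<Rightarrow> real \<Rightarrow> real) \<Rightarrow> (nat \<Rightarrow> real \<Rightarrow> real) \<Rightarrow> bool" where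
  "stef mu f f' \<longleftrightarrow> edge_ode m L mu f f' \<and>
        (\<forall>v\<in>V. \<forall>p\<in>v. \<forall>q\<in>v. ep_val L f p = ep_val L f q) \<and>
        (\<forall>v\<in>V. (\<Sum>p\<in>v. ep_der L f' p) = 0)"

lemma st_eig_iff: "st_eigenfunction m L V mu f \<longleftrightarrow> (\<exists>f'. stef mu f f')"
  unfolding st_eigenfunction_def stef_def by simp

lemma stef_eode: "stef mu f f' \<Longrightarrow> i < m \<Longrightarrow> eode (L i) mu (f i) (f' i)"
  unfolding stef_def edge_ode_eode by simp

lemma vert_val: "stef mu f f' \<Longrightarrow> p \<in> PP \<Longrightarrow> ep_val L f (sig p) = ep_val L f p"
  unfolding stef_def using vx[of p] sig[of p] by auto

lemma vert_der: "stef mu f f' \<Longrightarrow> p \<in> PP \<Longrightarrow> ep_der L f' (sig p) = - ep_der L f' p"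
proof -
  assume st: "stef mu f f'" and p: "p \<in> PP"
  have "(\<Sum>q\<in>vx p. ep_der L f' q) = 0" using st vx[OF p] unfolding stef_def by auto
  moreover have "p \<noteq> sig p" using sig[OF p] by auto
  ultimately show ?thesis using sig[OF p] by simp
qed

lemma rho_val: "stef mu f f' \<Longrightarrow> p \<in> PP \<Longrightarrow> ep_val L f (rho p) = ep_val L f (tau p)"
  unfolding rho_def using vert_val tau_PP by blast
lemma rho_der: "stef mu f f' \<Longrightarrow> p \<in> PP \<Longrightarrow> ep_der L f' (rho p) = - ep_der L f' (tau p)"
  unfolding rho_def using vert_der tau_PP by blast

lemma PP_cases: "p \<in> PP \<Longrightarrow> (\<And>i. i < m \<Longrightarrow> p = (i, False) \<Longrightarrow> R) \<Longrightarrow> (\<And>i. i < m \<Longrightarrow> p = (i, True) \<Longrightarrow> R) \<Longrightarrow> R"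
  unfolding PP_def by (cases p) (metis (full_types) lessThan_iff mem_Sigma_iff)

lemma Orb_funpow: "q \<in> Orb \<Longrightarrow> \<exists>n. q = (rho ^^ n) p0" unfolding Orb_def by blast

lemma Orb_vanish:
  assumes st: "stef mu f f'"
    and z: "\<And>q. q \<in> Orb \<Longrightarrow> ep_val L f q = 0 \<and> ep_der L f' q = 0"
    and i: "i < m" and x: "x \<in> {0..L i}"
  shows "f i x = 0"
proof -
  obtain b where b: "(i, b) \<in> Orb" using edge_in_Orb[OF i] by blast
  have L0: "0 \<le> L i" using Lpos[OF i] by simp
  have "(f i 0 = 0 \<and> f' i 0 = 0) \<or> (f i (L i) = 0 \<and> f' i (L i) = 0)"
    using z[OF b] by (cases b) (auto simp: ep_val_def ep_der_def)
  thus ?thesis using eode_vanish[OF stef_eode[OF st i] L0 _ x] by blast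
qed

definition wv :: "real \<Rightarrow> (nat \<Rightarrow> real \<Rightarrow> real) \<Rightarrow> (nat \<Rightarrow> real \<Rightarrow> real) \<Rightarrow> nat \<times> bool \<Rightarrow> complex" where
  "wv mu f f' p = Complex (ep_der L f' p) (sqrt mu * ep_val L f p)"

lemma w_rho:
  assumes st: "stef mu f f'" and mu: "mu > 0" and p: "p \<in> PP"
  shows "wv mu f f' (rho p) = wv mu f f' p * cis (sqrt mu * L (fst p))"
proof -
  from p show ?thesis
  proof (rule PP_cases)
    fix i assume i: "i < m" and pi: "p = (i, False)"
    have Li: "L i \<in> {0..L i}" using Lpos[OF i] by simp
    note A = eode_pos(1)[OF stef_eode[OF st i] mu Li] and B = eode_pos(2)[OF stef_eode[OF st i] mu Li]
    have e1: "ep_val L f (rho p) = f i (L i)" "ep_der L f' (rho p) = f' i (L i)"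
      using rho_val[OF st p] rho_der[OF st p] pi by (simp_all add: tau_def ep_val_def ep_der_def)
    define c where "c = cos (sqrt mu * L i)"
    define s where "s = sin (sqrt mu * L i)"
    have cs: "c * c + s * s = 1" unfolding c_def s_def by (metis sin_cos_squared_add2 power2_eq_square add.commute)
    have "f' i (L i) = f' i (L i) * (c * c + s * s)" using cs by simp
    also have "\<dots> = (f' i (L i) * c + sqrt mu * f i (L i) * s) * c - (sqrt mu * f i (L i) * c - f' i (L i) * s) * s"
      by (simp add: algebra_simps)
    finally have r1: "f' i (L i) = f' i 0 * c - sqrt mu * f i 0 * s"
      using A B unfolding c_def s_def by simp
    have "sqrt mu * f i (L i) = sqrt mu * f i (L i) * (c * c + s * s)" using cs by simp
    also have "\<dots> = (f' i (L i) * c + sqrt mu * f i (L i) * s) * s + (sqrt mu * f i (L i) * c - f' i (L i) * s) * c"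
      by (simp add: algebra_simps)
    finally have r2: "sqrt mu * f i (L i) = f' i 0 * s + sqrt mu * f i 0 * c"
      using A B unfolding c_def s_def by simp
    show ?thesis unfolding wv_def using e1 r1 r2 pi
      by (simp add: complex_eq_iff cis.ctr c_def s_def ep_val_def ep_der_def algebra_simps)
  next
    fix i assume i: "i < m" and pi: "p = (i, True)"
    have Li: "L i \<in> {0..L i}" using Lpos[OF i] by simp
    note A = eode_pos(1)[OF stef_eode[OF st i] mu Li] and B = eode_pos(2)[OF stef_eode[OF st i] mu Li]
    have e1: "ep_val L f (rho p) = f i 0" "ep_der L f' (rho p) = - f' i 0"
      using rho_val[OF st p] rho_der[OF st p] pi by (simp_all add: tau_def ep_val_def ep_der_def)
    show ?thesis unfolding wv_def using e1 pi A B
      by (simp add: complex_eq_iff cis.ctr ep_val_def ep_der_def algebra_simps)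
  qed
qed

lemma w_norm_Orb:
  assumes st: "stef mu f f'" and mu: "mu > 0" and q: "q \<in> Orb"
  shows "norm (wv mu f f' q) = norm (wv mu f f' p0)"
proof -
  have "norm (wv mu f f' ((rho ^^ n) p0)) = norm (wv mu f f' p0)" for n
  proof (induction n)
    case 0 thus ?case by simp
  next
    case (Suc n)
    have "(rho ^^ n) p0 \<in> PP" using funpow_PP p0_PP by blast
    thus ?case using w_rho[OF st mu] Suc by (simp add: norm_mult)
  qed
  thus ?thesis using Orb_funpow[OF q] by auto
qed

lemma pos_vanish:
  assumes st: "stef mu f f'" and mu: "mu > 0" and z: "f 0 0 = 0" "f' 0 0 = 0"
    and i: "i < m" and x: "x \<in> {0..L i}"
  shows "f i x = 0"
proof (rule Orb_vanish[OF st _ i x])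
  fix q assume q: "q \<in> Orb"
  have "wv mu f f' p0 = 0" using z unfolding wv_def p0_def ep_val_def ep_der_def by (simp add: complex_eq_iff)
  hence "wv mu f f' q = 0" using w_norm_Orb[OF st mu q] by simp
  thus "ep_val L f q = 0 \<and> ep_der L f' q = 0" using mu unfolding wv_def by (simp add: complex_eq_iff)
qed

lemma pos_quant:
  assumes st: "stef mu f f'" and mu: "mu > 0" and nz: "\<not> (\<forall>i<m. \<forall>x\<in>{0..L i}. f i x = 0)"
  shows "\<exists>n::int. sqrt mu * (\<Sum>i<m. L i) = n * 2 * pi"
proof -
  have w0: "wv mu f f' p0 \<noteq> 0"
  proof
    assume "wv mu f f' p0 = 0"
    hence "f 0 0 = 0" "f' 0 0 = 0" using mu unfolding wv_def p0_def ep_val_def ep_der_def by (simp_all add: complex_eq_iff)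
    thus False using nz pos_vanish[OF st mu] by blast
  qed
  have nzq: "wv mu f f' q \<noteq> 0" if "q \<in> Orb" for q using w_norm_Orb[OF st mu that] w0 by auto
  define P where "P = (\<Prod>q\<in>Orb. wv mu f f' q)"
  have P0: "P \<noteq> 0" unfolding P_def using nzq finite_Orb by simp
  have "P = (\<Prod>q\<in>Orb. wv mu f f' (rho q))"
    unfolding P_def using prod.reindex_bij_betw[OF bij_rho_Orb, of "wv mu f f'"] by simp
  also have "\<dots> = (\<Prod>q\<in>Orb. wv mu f f' q * cis (sqrt mu * L (fst q)))"
    using w_rho[OF st mu] Orb_PP by (intro prod.cong) auto
  also have "\<dots> = P * (\<Prod>q\<in>Orb. cis (sqrt mu * L (fst q)))"
    unfolding P_def by (simp add: prod.distrib)
  also have "(\<Prod>q\<in>Orb. cis (sqrt mu * L (fst q))) = (\<Prod>i<m. cis (sqrt mu * L i))"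
    by (rule prod_Orb)
  also have "\<dots> = cis (sqrt mu * (\<Sum>i<m. L i))" by (simp add: prod_cis sum_distrib_left)
  finally have "cis (sqrt mu * (\<Sum>i<m. L i)) = 1" using P0 by simp
  hence "cos (sqrt mu * (\<Sum>i<m. L i)) = 1" by (simp add: complex_eq_iff)
  thus ?thesis using cos_one_2pi_int by blast
qed

end

context cyc begin

lemma neg_rho:
  assumes st: "stef mu f f'" and mu: "mu < 0" and p: "p \<in> PP"
  defines "k \<equiv> sqrt (- mu)"
  shows "ep_der L f' (rho p) + k * ep_val L f (rho p) = (ep_der L f' p + k * ep_val L f p) * exp (k * L (fst p))"
    and "ep_der L f' (rho p) - k * ep_val L f (rho p) = (ep_der L f' p - k * ep_val L f p) * exp (- (k * L (fst p)))"
proof -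
  have ee: "exp (k * L i) * exp (- (k * L i)) = 1" for i by (simp add: exp_minus field_simps)
  have "(ep_der L f' (rho p) + k * ep_val L f (rho p) = (ep_der L f' p + k * ep_val L f p) * exp (k * L (fst p)))
      \<and> (ep_der L f' (rho p) - k * ep_val L f (rho p) = (ep_der L f' p - k * ep_val L f p) * exp (- (k * L (fst p))))"
    using p
  proof (rule PP_cases)
    fix i assume i: "i < m" and pi: "p = (i, False)"
    have Li: "L i \<in> {0..L i}" using Lpos[OF i] by simp
    note A = eode_neg(1)[OF stef_eode[OF st i] mu Li] and B = eode_neg(2)[OF stef_eode[OF st i] mu Li]
    have e1: "ep_val L f (rho p) = f i (L i)" "ep_der L f' (rho p) = f' i (L i)"
      using rho_val[OF st p] rho_der[OF st p] pi by (simp_all add: tau_def ep_val_def ep_der_def)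
    have "(f' i 0 + k * f i 0) * exp (k * L i) = (f' i (L i) + k * f i (L i)) * (exp (- (k * L i)) * exp (k * L i))"
      by (simp add: A[folded k_def, symmetric] mult.assoc)
    hence r1: "f' i (L i) + k * f i (L i) = (f' i 0 + k * f i 0) * exp (k * L i)"
      by (simp add: exp_minus)
    have "(f' i 0 - k * f i 0) * exp (- (k * L i)) = (f' i (L i) - k * f i (L i)) * (exp (k * L i) * exp (- (k * L i)))"
      by (simp add: B[folded k_def, symmetric] mult.assoc)
    hence r2: "f' i (L i) - k * f i (L i) = (f' i 0 - k * f i 0) * exp (- (k * L i))"
      by (simp add: exp_minus)
    show ?thesis using e1 r1 r2 pi by (simp add: ep_val_def ep_der_def)
  next
    fix i assume i: "i < m" and pi: "p = (i, True)"
    have Li: "L i \<in> {0..L i}" using Lpos[OF i] by simp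
    note A = eode_neg(1)[OF stef_eode[OF st i] mu Li] and B = eode_neg(2)[OF stef_eode[OF st i] mu Li]
    have e1: "ep_val L f (rho p) = f i 0" "ep_der L f' (rho p) = - f' i 0"
      using rho_val[OF st p] rho_der[OF st p] pi by (simp_all add: tau_def ep_val_def ep_der_def)
    have r1: "- f' i 0 + k * f i 0 = (- f' i (L i) + k * f i (L i)) * exp (k * L i)"
      using B[folded k_def] by (simp add: algebra_simps)
    have r2: "- f' i 0 - k * f i 0 = (- f' i (L i) - k * f i (L i)) * exp (- (k * L i))"
      using A[folded k_def] by (simp add: algebra_simps)
    show ?thesis using e1 r1 r2 pi by (simp add: ep_val_def ep_der_def)
  qed
  thus "ep_der L f' (rho p) + k * ep_val L f (rho p) = (ep_der L f' p + k * ep_val L f p) * exp (k * L (fst p))"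
    and "ep_der L f' (rho p) - k * ep_val L f (rho p) = (ep_der L f' p - k * ep_val L f p) * exp (- (k * L (fst p)))"
    by auto
qed

lemma sum_growth_zero:
  fixes u c :: "nat \<times> bool \<Rightarrow> real"
  assumes g: "\<And>q. q \<in> Orb \<Longrightarrow> \<bar>u (rho q)\<bar> = \<bar>u q\<bar> * c q" and c: "\<And>q. q \<in> Orb \<Longrightarrow> c q > 1"
    and q: "q \<in> Orb"
  shows "u q = 0"
proof -
  have "(\<Sum>q\<in>Orb. \<bar>u (rho q)\<bar>) = (\<Sum>q\<in>Orb. \<bar>u q\<bar>)"
    using sum.reindex_bij_betw[OF bij_rho_Orb, of "\<lambda>q. \<bar>u q\<bar>"] by simp
  hence "(\<Sum>q\<in>Orb. \<bar>u q\<bar> * (c q - 1)) = 0"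
    using g by (simp add: algebra_simps sum_subtractf)
  moreover have nn: "\<And>q. q \<in> Orb \<Longrightarrow> 0 \<le> \<bar>u q\<bar> * (c q - 1)"
  proof -
    fix q assume "q \<in> Orb"
    hence "0 \<le> c q - 1" using c[of q] by auto
    thus "0 \<le> \<bar>u q\<bar> * (c q - 1)" by (rule mult_nonneg_nonneg[OF abs_ge_zero])
  qed
  ultimately have "\<forall>q\<in>Orb. \<bar>u q\<bar> * (c q - 1) = 0" using sum_nonneg_eq_0_iff[OF finite_Orb nn] by simp
  hence "\<bar>u q\<bar> * (c q - 1) = 0" using q by blast
  thus ?thesis using c[OF q] by simp
qed

lemma sum_shrink_zero:
  fixes u c :: "nat \<times> bool \<Rightarrow> real"
  assumes g: "\<And>q. q \<in> Orb \<Longrightarrow> \<bar>u (rho q)\<bar> = \<bar>u q\<bar> * c q" and c: "\<And>q. q \<in> Orb \<Longrightarrow> c q < 1 \<and> c q \<ge> 0"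
    and q: "q \<in> Orb"
  shows "u q = 0"
proof -
  have "(\<Sum>q\<in>Orb. \<bar>u (rho q)\<bar>) = (\<Sum>q\<in>Orb. \<bar>u q\<bar>)"
    using sum.reindex_bij_betw[OF bij_rho_Orb, of "\<lambda>q. \<bar>u q\<bar>"] by simp
  hence "(\<Sum>q\<in>Orb. \<bar>u q\<bar> * (1 - c q)) = 0"
    using g by (simp add: algebra_simps sum_subtractf)
  moreover have nn: "\<And>q. q \<in> Orb \<Longrightarrow> 0 \<le> \<bar>u q\<bar> * (1 - c q)"
  proof -
    fix q assume "q \<in> Orb"
    hence "0 \<le> 1 - c q" using c[of q] by auto
    thus "0 \<le> \<bar>u q\<bar> * (1 - c q)" by (rule mult_nonneg_nonneg[OF abs_ge_zero])
  qed
  ultimately have "\<forall>q\<in>Orb. \<bar>u q\<bar> * (1 - c q) = 0" using sum_nonneg_eq_0_iff[OF finite_Orb nn] by simp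
  hence "\<bar>u q\<bar> * (1 - c q) = 0" using q by blast
  thus ?thesis using c[OF q] by simp
qed

lemma neg_vanish:
  assumes st: "stef mu f f'" and mu: "mu < 0" and i: "i < m" and x: "x \<in> {0..L i}"
  shows "f i x = 0"
proof (rule Orb_vanish[OF st _ i x])
  fix q assume q: "q \<in> Orb"
  define k where "k = sqrt (- mu)"
  have k0: "k > 0" using mu unfolding k_def by simp
  have Lq: "L (fst q) > 0" if "q \<in> Orb" for q using that Orb_PP Lpos unfolding PP_def by auto
  have a: "ep_der L f' q + k * ep_val L f q = 0"
    apply (rule sum_growth_zero[where c = "\<lambda>q. exp (k * L (fst q))", OF _ _ q])
    using neg_rho(1)[OF st mu, folded k_def] Orb_PP k0 Lq by (auto simp: abs_mult)
  have b: "ep_der L f' q - k * ep_val L f q = 0"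
    apply (rule sum_shrink_zero[where c = "\<lambda>q. exp (- (k * L (fst q)))", OF _ _ q])
    using neg_rho(2)[OF st mu, folded k_def] Orb_PP k0 Lq by (auto simp: abs_mult)
  show "ep_val L f q = 0 \<and> ep_der L f' q = 0" using a b k0 by auto
qed

lemma zero_rho:
  assumes st: "stef 0 f f'" and p: "p \<in> PP"
  shows "ep_der L f' (rho p) = ep_der L f' p"
    and "ep_val L f (rho p) = ep_val L f p + ep_der L f' p * L (fst p)"
proof -
  have "ep_der L f' (rho p) = ep_der L f' p \<and> ep_val L f (rho p) = ep_val L f p + ep_der L f' p * L (fst p)"
    using p
  proof (rule PP_cases)
    fix i assume i: "i < m" and pi: "p = (i, False)"
    have Li: "L i \<in> {0..L i}" using Lpos[OF i] by simp
    note A = eode_zero[OF stef_eode[OF st i] Li]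
    have e1: "ep_val L f (rho p) = f i (L i)" "ep_der L f' (rho p) = f' i (L i)"
      using rho_val[OF st p] rho_der[OF st p] pi by (simp_all add: tau_def ep_val_def ep_der_def)
    show ?thesis using e1 A pi by (simp add: ep_val_def ep_der_def algebra_simps)
  next
    fix i assume i: "i < m" and pi: "p = (i, True)"
    have Li: "L i \<in> {0..L i}" using Lpos[OF i] by simp
    note A = eode_zero[OF stef_eode[OF st i] Li]
    have e1: "ep_val L f (rho p) = f i 0" "ep_der L f' (rho p) = - f' i 0"
      using rho_val[OF st p] rho_der[OF st p] pi by (simp_all add: tau_def ep_val_def ep_der_def)
    show ?thesis using e1 A pi by (simp add: ep_val_def ep_der_def algebra_simps)
  qed
  thus "ep_der L f' (rho p) = ep_der L f' p" "ep_val L f (rho p) = ep_val L f p + ep_der L f' p * L (fst p)"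
    by auto
qed

lemma zero_const:
  assumes st: "stef 0 f f'" and i: "i < m" and x: "x \<in> {0..L i}"
  shows "f i x = f 0 0"
proof -
  have der_n: "ep_der L f' ((rho ^^ n) p0) = ep_der L f' p0" for n
    by (induction n) (use zero_rho(1)[OF st] funpow_PP p0_PP in auto)
  have der_c: "ep_der L f' q = ep_der L f' p0" if "q \<in> Orb" for q
    using Orb_funpow[OF that] der_n by auto
  have "(\<Sum>q\<in>Orb. ep_val L f (rho q)) = (\<Sum>q\<in>Orb. ep_val L f q)"
    using sum.reindex_bij_betw[OF bij_rho_Orb, of "ep_val L f"] by simp
  moreover have "(\<Sum>q\<in>Orb. ep_val L f (rho q)) = (\<Sum>q\<in>Orb. ep_val L f q + ep_der L f' p0 * L (fst q))"
    by (rule sum.cong) (use zero_rho(2)[OF st] Orb_PP der_c in auto)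
  hence "(\<Sum>q\<in>Orb. ep_val L f (rho q)) = (\<Sum>q\<in>Orb. ep_val L f q) + (\<Sum>q\<in>Orb. ep_der L f' p0 * L (fst q))"
    by (simp add: sum.distrib)
  ultimately have "ep_der L f' p0 * (\<Sum>q\<in>Orb. L (fst q)) = 0" by (simp add: sum_distrib_left)
  moreover have "(\<Sum>q\<in>Orb. L (fst q)) > 0"
    unfolding sum_Orb using Lpos m_pos by (intro sum_pos) auto
  ultimately have d0: "ep_der L f' p0 = 0" by simp
  have val_n: "ep_val L f ((rho ^^ n) p0) = ep_val L f p0" for n
  proof (induction n)
    case 0 thus ?case by simp
  next
    case (Suc n)
    have "(rho ^^ n) p0 \<in> Orb" unfolding Orb_def by blast
    thus ?case using zero_rho(2)[OF st] funpow_PP[OF p0_PP] der_c d0 Suc by simp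
  qed
  obtain b where b: "(i, b) \<in> Orb" using edge_in_Orb[OF i] by blast
  have Li: "L i \<in> {0..L i}" "0 \<in> {0..L i}" using Lpos[OF i] by auto
  note Z = eode_zero[OF stef_eode[OF st i]]
  obtain n where n: "(i, b) = (rho ^^ n) p0" using Orb_funpow[OF b] by blast
  have "ep_val L f (i,b) = ep_val L f p0" unfolding n by (rule val_n)
  hence vb: "ep_val L f (i, b) = f 0 0" unfolding p0_def by (simp add: ep_val_def)
  have db: "ep_der L f' (i, b) = 0" using der_c[OF b] d0 by simp
  have "f' i 0 = 0" using db Z(1)[OF Li(1)] by (cases b) (auto simp: ep_der_def)
  hence hx: "f i x = f i 0" and hL: "f i (L i) = f i 0" using Z(2)[OF x] Z(2)[OF Li(1)] by auto
  have "ep_val L f (i, b) = f i 0" using hL by (cases b) (simp_all add: ep_val_def)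
  with vb hx show ?thesis by linarith
qed

end

lemma three_dep:
  fixes x1 x2 x3 y1 y2 y3 :: real
  shows "\<exists>a b c. (a \<noteq> 0 \<or> b \<noteq> 0 \<or> c \<noteq> 0) \<and> a*x1 + b*x2 + c*x3 = 0 \<and> a*y1 + b*y2 + c*y3 = 0"
proof -
  define a where "a = x2*y3 - y2*x3"
  define b where "b = x3*y1 - y3*x1"
  define c where "c = x1*y2 - y1*x2"
  have e1: "a*x1 + b*x2 + c*x3 = 0" "a*y1 + b*y2 + c*y3 = 0" unfolding a_def b_def c_def by algebra+
  show ?thesis
  proof (cases "a \<noteq> 0 \<or> b \<noteq> 0 \<or> c \<noteq> 0")
    case True thus ?thesis using e1 by blast
  next
    case False
    hence c0: "x1*y2 - y1*x2 = 0" unfolding c_def by simp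
    show ?thesis
    proof (cases "x1 = 0 \<and> y1 = 0")
      case True thus ?thesis by (intro exI[of _ 1] exI[of _ 0]) simp
    next
      case nz: False
      define t where "t = (x1*x2 + y1*y2) / (x1^2 + y1^2)"
      have d: "x1^2 + y1^2 \<noteq> 0" using nz by (simp add: add_nonneg_eq_0_iff)
      have "t * x1 - x2 = (x1*(x1*x2 + y1*y2) - x2*(x1^2+y1^2)) / (x1^2 + y1^2)"
        unfolding t_def using d by (simp add: field_simps)
      also have "x1*(x1*x2 + y1*y2) - x2*(x1^2+y1^2) = y1 * (x1*y2 - y1*x2)" by (simp add: algebra_simps power2_eq_square)
      finally have r1: "t * x1 - x2 = 0" using c0 by simp
      have "t * y1 - y2 = (y1*(x1*x2 + y1*y2) - y2*(x1^2+y1^2)) / (x1^2 + y1^2)"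
        unfolding t_def using d by (simp add: field_simps)
      also have "y1*(x1*x2 + y1*y2) - y2*(x1^2+y1^2) = - x1 * (x1*y2 - y1*x2)" by (simp add: algebra_simps power2_eq_square)
      finally have r2: "t * y1 - y2 = 0" using c0 by simp
      show ?thesis using r1 r2 by (intro exI[of _ t] exI[of _ "-1"] exI[of _ 0]) simp
    qed
  qed
qed

lemma dep_gen:
  assumes li: "lin_indep_on m L n fs" and S: "S \<subseteq> {..<n}"
    and z: "\<And>i x. i < m \<Longrightarrow> x \<in> {0..L i} \<Longrightarrow> (\<Sum>j\<in>S. cc j * fs j i x) = 0"
    and j: "j \<in> S"
  shows "cc j = 0"
proof -
  define c' where "c' j = (if j \<in> S then cc j else 0)" for j
  have "(\<Sum>j<n. c' j * fs j i x) = (\<Sum>j\<in>S. cc j * fs j i x)" for i x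
  proof -
    have "(\<Sum>j<n. c' j * fs j i x) = (\<Sum>j\<in>{..<n}. if j \<in> S then cc j * fs j i x else 0)"
      unfolding c'_def by (intro sum.cong) auto
    also have "\<dots> = (\<Sum>j\<in>{..<n} \<inter> S. cc j * fs j i x)" by (simp add: sum.inter_restrict)
    also have "{..<n} \<inter> S = S" using S by blast
    finally show ?thesis .
  qed
  hence "\<forall>i<m. \<forall>x\<in>{0..L i}. (\<Sum>j<n. c' j * fs j i x) = 0" using z by simp
  hence "\<forall>j<n. c' j = 0" using li unfolding lin_indep_on_def by blast
  thus ?thesis using j S unfolding c'_def by auto
qed

lemma dep1:
  assumes li: "lin_indep_on m L n fs" and j: "j < n"
  shows "\<not> (\<forall>i<m. \<forall>x\<in>{0..L i}. fs j i x = 0)"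
proof
  assume z: "\<forall>i<m. \<forall>x\<in>{0..L i}. fs j i x = 0"
  have "(\<lambda>_. 1::real) j = 0"
    by (rule dep_gen[OF li, of "{j}"]) (use j z in auto)
  thus False by simp
qed

lemma dep2:
  assumes li: "lin_indep_on m L n fs" and j: "j1 < n" "j2 < n" "j1 \<noteq> j2"
    and z: "\<And>i x. i < m \<Longrightarrow> x \<in> {0..L i} \<Longrightarrow> a * fs j1 i x + b * fs j2 i x = 0"
  shows "a = 0 \<and> b = 0"
proof -
  define cc where "cc j = (if j = j1 then a else b)" for j
  have s: "(\<Sum>j\<in>{j1,j2}. cc j * fs j i x) = a * fs j1 i x + b * fs j2 i x" for i x
    using j unfolding cc_def by simp
  have "cc j1 = 0" "cc j2 = 0"
    by (rule dep_gen[OF li, of "{j1,j2}"]; use j z s in auto)+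
  thus ?thesis using j unfolding cc_def by auto
qed

lemma dep3:
  assumes li: "lin_indep_on m L n fs" and j: "j1 < n" "j2 < n" "j3 < n" "j1 \<noteq> j2" "j1 \<noteq> j3" "j2 \<noteq> j3"
    and z: "\<And>i x. i < m \<Longrightarrow> x \<in> {0..L i} \<Longrightarrow> a * fs j1 i x + b * fs j2 i x + c * fs j3 i x = 0"
  shows "a = 0 \<and> b = 0 \<and> c = 0"
proof -
  define cc where "cc j = (if j = j1 then a else if j = j2 then b else c)" for j
  have s: "(\<Sum>j\<in>{j1,j2,j3}. cc j * fs j i x) = a * fs j1 i x + b * fs j2 i x + c * fs j3 i x" for i x
    using j unfolding cc_def by (simp add: algebra_simps)
  have "cc j1 = 0" "cc j2 = 0" "cc j3 = 0"
    by (rule dep_gen[OF li, of "{j1,j2,j3}"]; use j z s in auto)+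
  thus ?thesis using j unfolding cc_def by auto
qed

context cyc begin

lemma comb_stef:
  assumes s1: "stef mu f1 d1" and s2: "stef mu f2 d2" and s3: "stef mu f3 d3"
  shows "stef mu (\<lambda>i x. a * f1 i x + b * f2 i x + c * f3 i x) (\<lambda>i x. a * d1 i x + b * d2 i x + c * d3 i x)"
proof -
  have ode: "edge_ode m L mu (\<lambda>i x. a * f1 i x + b * f2 i x + c * f3 i x) (\<lambda>i x. a * d1 i x + b * d2 i x + c * d3 i x)"
    unfolding edge_ode_def
  proof (intro allI impI ballI conjI)
    fix i x assume i: "i < m" and x: "x \<in> {0..L i}"
    have e: "eode (L i) mu (f1 i) (d1 i)" "eode (L i) mu (f2 i) (d2 i)" "eode (L i) mu (f3 i) (d3 i)"
      using stef_eode s1 s2 s3 i by blast+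
    have D: "(f1 i has_real_derivative d1 i x) (at x within {0..L i})"
      "(f2 i has_real_derivative d2 i x) (at x within {0..L i})"
      "(f3 i has_real_derivative d3 i x) (at x within {0..L i})"
      "(d1 i has_real_derivative (- mu * f1 i x)) (at x within {0..L i})"
      "(d2 i has_real_derivative (- mu * f2 i x)) (at x within {0..L i})"
      "(d3 i has_real_derivative (- mu * f3 i x)) (at x within {0..L i})"
      using e x unfolding eode_def by blast+
    show "((\<lambda>x. a * f1 i x + b * f2 i x + c * f3 i x) has_real_derivative a * d1 i x + b * d2 i x + c * d3 i x) (at x within {0..L i})"
      by (auto intro!: derivative_eq_intros D)
    show "((\<lambda>x. a * d1 i x + b * d2 i x + c * d3 i x) has_real_derivative - mu * (a * f1 i x + b * f2 i x + c * f3 i x)) (at x within {0..L i})"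
      by (rule derivative_eq_intros D | simp)+ (simp add: algebra_simps)
  qed
  have ev: "ep_val L (\<lambda>i x. a * f1 i x + b * f2 i x + c * f3 i x) p = a * ep_val L f1 p + b * ep_val L f2 p + c * ep_val L f3 p" for p
    unfolding ep_val_def by simp
  have ed: "ep_der L (\<lambda>i x. a * d1 i x + b * d2 i x + c * d3 i x) p = a * ep_der L d1 p + b * ep_der L d2 p + c * ep_der L d3 p" for p
    unfolding ep_der_def by simp
  show ?thesis unfolding stef_def
  proof (intro conjI ode ballI)
    fix v p q assume "v \<in> V" "p \<in> v" "q \<in> v"
    thus "ep_val L (\<lambda>i x. a * f1 i x + b * f2 i x + c * f3 i x) p = ep_val L (\<lambda>i x. a * f1 i x + b * f2 i x + c * f3 i x) q"
      using s1 s2 s3 unfolding stef_def ev by metis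
  next
    fix v assume v: "v \<in> V"
    have "(\<Sum>p\<in>v. ep_der L (\<lambda>i x. a * d1 i x + b * d2 i x + c * d3 i x) p)
        = a * (\<Sum>p\<in>v. ep_der L d1 p) + b * (\<Sum>p\<in>v. ep_der L d2 p) + c * (\<Sum>p\<in>v. ep_der L d3 p)"
      unfolding ed by (simp add: sum.distrib sum_distrib_left)
    thus "(\<Sum>p\<in>v. ep_der L (\<lambda>i x. a * d1 i x + b * d2 i x + c * d3 i x) p) = 0"
      using s1 s2 s3 v unfolding stef_def by simp
  qed
qed

end

lemma sum_if12: "(\<Sum>k\<le>(K::nat). (if k = 0 then 1 else 2::nat)) = 2 * K + 1"
  by (induction K) auto

context cyc begin

lemma st_lower:
  assumes EN: "(\<Sum>i<m. L i) = real N" and oddN: "odd N"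
    and fs: "\<forall>j<N+1. mu j \<le> t \<and> st_eigenfunction m L V (mu j) (fs j)"
    and li: "lin_indep_on m L (N+1) fs"
  shows "t \<ge> (pi * (N+1) / N)^2"
proof (rule ccontr)
  assume "\<not> ?thesis"
  hence tl: "t < (pi * (N+1) / N)^2" by simp
  obtain K where NK: "N = 2*K+1" using oddN oddE by blast
  have Npos: "real N > 0" using NK by simp
  have "\<forall>j. \<exists>d. j < N+1 \<longrightarrow> stef (mu j) (fs j) d" using fs st_eig_iff by blast
  then obtain D where D: "\<And>j. j < N+1 \<Longrightarrow> stef (mu j) (fs j) (D j)" by (metis choice)
  have nz: "\<not> (\<forall>i<m. \<forall>x\<in>{0..L i}. fs j i x = 0)" if "j < N+1" for j using dep1[OF li that] .
  have cls: "\<exists>k::nat. k \<le> K \<and> mu j = (2*pi*k/N)^2" if j: "j < N+1" for j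
  proof -
    consider "mu j < 0" | "mu j = 0" | "mu j > 0" by linarith
    thus ?thesis
    proof cases
      case 1 thus ?thesis using neg_vanish[OF D[OF j] 1] nz[OF j] by blast
    next
      case 2 thus ?thesis by (intro exI[of _ 0]) simp
    next
      case 3
      obtain n :: int where n: "sqrt (mu j) * (\<Sum>i<m. L i) = real_of_int n * 2 * pi"
        using pos_quant[OF D[OF j] 3 nz[OF j]] by blast
      hence n': "sqrt (mu j) * N = real_of_int n * 2 * pi" using EN by simp
      have sp: "sqrt (mu j) > 0" using 3 by simp
      have "real_of_int n * 2 * pi > 0" using n' sp Npos by (metis mult_pos_pos)
      hence npos: "n > 0" by (simp add: zero_less_mult_iff)
      have "mu j < (pi * (N+1) / N)^2" using fs j tl by force
      hence "sqrt (mu j) < pi * (N+1) / N"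
        using real_sqrt_less_mono by (metis abs_of_nonneg divide_nonneg_pos less_eq_real_def mult_nonneg_nonneg of_nat_0_le_iff pi_ge_zero real_sqrt_abs Npos)
      hence "sqrt (mu j) * N < pi * (N+1)" using Npos by (simp add: field_simps)
      hence "real_of_int n * 2 * pi < pi * (N+1)" using n' by simp
      hence "real_of_int n * 2 < N + 1" using pi_gt_zero by (simp add: mult.commute)
      hence "n * 2 < int N + 1" by linarith
      hence nK: "nat n \<le> K" using NK by linarith
      have "mu j = (sqrt (mu j))^2" using 3 by simp
      also have "sqrt (mu j) = 2 * pi * real (nat n) / N" using n' npos Npos by (simp add: field_simps)
      finally show ?thesis using nK by blast
    qed
  qed
  have "\<forall>j. \<exists>k. j < N+1 \<longrightarrow> k \<le> K \<and> mu j = (2*pi*k/N)^2" using cls by blast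
  then obtain kk where kk: "\<And>j. j < N+1 \<Longrightarrow> kk j \<le> K \<and> mu j = (2*pi*(kk j)/N)^2" by (metis choice)
  define A where "A k = {j. j < N+1 \<and> kk j = k}" for k
  have finA: "finite (A k)" for k unfolding A_def by simp
  have c0: "card (A 0) \<le> 1"
  proof (rule ccontr)
    assume "\<not> card (A 0) \<le> 1"
    hence "Suc (Suc 0) \<le> card (A 0)" by simp
    then obtain j1 j2 where jj: "j1 \<in> A 0" "j2 \<in> A 0" "j1 \<noteq> j2"
      by (auto simp: card_le_Suc_iff)
    have j: "j1 < N+1" "j2 < N+1" "kk j1 = 0" "kk j2 = 0" using jj unfolding A_def by auto
    have m0: "mu j1 = 0" "mu j2 = 0" using kk[OF j(1)] kk[OF j(2)] j by auto
    have c1: "fs j1 i x = fs j1 0 0" "fs j2 i x = fs j2 0 0" if "i < m" "x \<in> {0..L i}" for i x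
      using zero_const[OF D[OF j(1), unfolded m0(1)] that] zero_const[OF D[OF j(2), unfolded m0(2)] that] by auto
    have "fs j2 0 0 = 0 \<and> - fs j1 0 0 = 0"
      by (rule dep2[OF li j(1) j(2) jj(3)]) (simp add: c1)
    hence "\<forall>i<m. \<forall>x\<in>{0..L i}. fs j1 i x = 0" using c1 by simp
    thus False using nz[OF j(1)] by blast
  qed
  have c2: "card (A k) \<le> 2" if k: "k \<ge> 1" for k
  proof (rule ccontr)
    assume "\<not> card (A k) \<le> 2"
    hence "Suc (Suc (Suc 0)) \<le> card (A k)" by simp
    then obtain j1 j2 j3 where jj: "j1 \<in> A k" "j2 \<in> A k" "j3 \<in> A k" "j1 \<noteq> j2" "j1 \<noteq> j3" "j2 \<noteq> j3"
      by (auto simp: card_le_Suc_iff)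
    have j: "j1 < N+1" "j2 < N+1" "j3 < N+1" "kk j1 = k" "kk j2 = k" "kk j3 = k" using jj unfolding A_def by auto
    define mu0 where "mu0 = (2*pi*k/N)^2"
    have m0: "mu j1 = mu0" "mu j2 = mu0" "mu j3 = mu0" using kk j unfolding mu0_def by auto
    have "2*pi*real k/N > 0" by (intro divide_pos_pos mult_pos_pos) (use k Npos in auto)
    hence mu0: "mu0 > 0" unfolding mu0_def by (rule zero_less_power)
    note S1 = D[OF j(1), unfolded m0] and S2 = D[OF j(2), unfolded m0] and S3 = D[OF j(3), unfolded m0]
    obtain a b c where abc: "a \<noteq> 0 \<or> b \<noteq> 0 \<or> c \<noteq> 0"
      "a * D j1 0 0 + b * D j2 0 0 + c * D j3 0 0 = 0" "a * fs j1 0 0 + b * fs j2 0 0 + c * fs j3 0 0 = 0"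
      using three_dep[of "D j1 0 0" "D j2 0 0" "D j3 0 0" "fs j1 0 0" "fs j2 0 0" "fs j3 0 0"] by blast
    note G = comb_stef[OF S1 S2 S3, of a b c]
    have "a * fs j1 i x + b * fs j2 i x + c * fs j3 i x = 0" if "i < m" "x \<in> {0..L i}" for i x
      using pos_vanish[OF G mu0 _ _ that] abc by simp
    hence "a = 0 \<and> b = 0 \<and> c = 0" using dep3[OF li j(1-3) jj(4-6)] by blast
    thus False using abc by simp
  qed
  have U: "{..<N+1} = (\<Union>k\<in>{..K}. A k)" unfolding A_def using kk by auto
  have "N + 1 = card (\<Union>k\<in>{..K}. A k)" using U by (metis card_lessThan)
  also have "\<dots> = (\<Sum>k\<le>K. card (A k))"
    by (rule card_UN_disjoint) (auto simp: finA A_def)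
  also have "\<dots> \<le> (\<Sum>k\<le>K. (if k = 0 then 1 else 2))"
    by (rule sum_mono) (use c0 c2 in auto)
  also have "\<dots> = N" using sum_if12 NK by simp
  finally show False by simp
qed

end

lemma cos_int:
  fixes n :: int and L :: real
  assumes L: "L > 0"
  shows "((\<lambda>x. cos (pi * n * x / L)) has_integral (if n = 0 then L else 0)) {0..L}"
proof (cases "n = 0")
  case True
  thus ?thesis using has_integral_const_real[of "1::real" 0 L] L by (simp add: real_scaleR_def)
next
  case False
  define F where "F x = L / (pi * n) * sin (pi * n * x / L)" for x
  have d: "(F has_vector_derivative cos (pi * n * x / L)) (at x within {0..L})" for x
  proof -
    have "(F has_real_derivative (L / (pi * n) * (cos (pi * n * x / L) * (pi * n / L)))) (at x within {0..L})"
      unfolding F_def by (auto intro!: derivative_eq_intros)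
    moreover have "L / (pi * n) * (cos (pi * n * x / L) * (pi * n / L)) = cos (pi * n * x / L)"
      using False L by (simp add: field_simps)
    ultimately show ?thesis by (simp add: has_real_derivative_iff_has_vector_derivative)
  qed
  have "((\<lambda>x. cos (pi * n * x / L)) has_integral (F L - F 0)) {0..L}"
    by (rule fundamental_theorem_of_calculus) (use L d in auto)
  moreover have "F L - F 0 = 0" unfolding F_def using L by (simp add: mult.commute)
  ultimately show ?thesis using False by simp
qed

lemma sin_orth:
  fixes a b :: nat and L :: real
  assumes L: "L > 0" and ab: "a \<ge> 1" "b \<ge> 1"
  shows "((\<lambda>x. sin (pi * a * x / L) * sin (pi * b * x / L)) has_integral (if a = b then L/2 else 0)) {0..L}"
proof -
  have e: "sin (pi * a * x / L) * sin (pi * b * x / L)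
      = (1/2) * cos (pi * of_int (int a - int b) * x / L) - (1/2) * cos (pi * of_int (int a + int b) * x / L)" for x
  proof -
    have "cos (pi * of_int (int a - int b) * x / L) = cos (pi * a * x / L - pi * b * x / L)"
      by (simp add: algebra_simps diff_divide_distrib)
    moreover have "cos (pi * of_int (int a + int b) * x / L) = cos (pi * a * x / L + pi * b * x / L)"
      by (simp add: algebra_simps add_divide_distrib)
    ultimately show ?thesis by (simp add: cos_diff cos_add field_simps)
  qed
  have "((\<lambda>x. (1/2) * cos (pi * of_int (int a - int b) * x / L) - (1/2) * cos (pi * of_int (int a + int b) * x / L))
      has_integral ((1/2) * (if int a - int b = 0 then L else 0) - (1/2) * (if int a + int b = 0 then L else 0))) {0..L}"
    by (intro has_integral_diff has_integral_mult_right cos_int L)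
  moreover have "(1/2) * (if int a - int b = 0 then L else 0) - (1/2) * (if int a + int b = 0 then L else 0)
      = (if a = b then L/2 else 0)" using ab by auto
  ultimately show ?thesis unfolding e by simp
qed

lemma cos_orth:
  fixes a b :: nat
  shows "((\<lambda>x. cos (2 * pi * a * x) * cos (2 * pi * b * x)) has_integral
           (if a = b then (if a = 0 then 1 else 1/2) else 0)) {0..1}"
proof -
  have e: "cos (2 * pi * a * x) * cos (2 * pi * b * x)
      = (1/2) * cos (pi * of_int (2 * int a - 2 * int b) * x / 1) + (1/2) * cos (pi * of_int (2 * int a + 2 * int b) * x / 1)" for x
  proof -
    have "cos (pi * of_int (2 * int a - 2 * int b) * x / 1) = cos (2 * pi * a * x - 2 * pi * b * x)"
      by (simp add: algebra_simps)
    moreover have "cos (pi * of_int (2 * int a + 2 * int b) * x / 1) = cos (2 * pi * a * x + 2 * pi * b * x)"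
      by (simp add: algebra_simps)
    ultimately show ?thesis by (simp add: cos_diff cos_add field_simps)
  qed
  have "((\<lambda>x. (1/2) * cos (pi * of_int (2 * int a - 2 * int b) * x / 1) + (1/2) * cos (pi * of_int (2 * int a + 2 * int b) * x / 1))
      has_integral ((1/2) * (if 2 * int a - 2 * int b = 0 then 1 else 0) + (1/2) * (if 2 * int a + 2 * int b = 0 then 1 else 0))) {0..1}"
    using cos_int[of "1::real" "2 * int a - 2 * int b"] cos_int[of "1::real" "2 * int a + 2 * int b"]
    by (intro has_integral_add has_integral_mult_right) simp_all
  moreover have "(1/2) * (if 2 * int a - 2 * int b = 0 then 1 else 0) + (1/2) * (if 2 * int a + 2 * int b = 0 then (1::real) else 0)
      = (if a = b then (if a = 0 then 1 else 1/2) else 0)" by auto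
  ultimately show ?thesis unfolding e by simp
qed

lemma orth_indep:
  fixes g :: "nat \<Rightarrow> real \<Rightarrow> real"
  assumes z: "\<And>x. x \<in> {a..b} \<Longrightarrow> (\<Sum>j\<in>S. c j * g j x) = 0" and S: "finite S" "j0 \<in> S"
    and o: "\<And>j. j \<in> S \<Longrightarrow> ((\<lambda>x. g j x * g j0 x) has_integral (if j = j0 then nn else 0)) {a..b}"
    and nn: "nn \<noteq> 0"
  shows "c j0 = 0"
proof -
  have "((\<lambda>x. \<Sum>j\<in>S. c j * (g j x * g j0 x)) has_integral (\<Sum>j\<in>S. c j * (if j = j0 then nn else 0))) {a..b}"
    by (intro has_integral_sum S has_integral_mult_right o)
  moreover have "(\<Sum>j\<in>S. c j * (if j = j0 then nn else 0)) = c j0 * nn"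
    using S by (simp add: if_distrib cong: if_cong)
  ultimately have h: "((\<lambda>x. \<Sum>j\<in>S. c j * (g j x * g j0 x)) has_integral (c j0 * nn)) {a..b}" by simp
  have "((\<lambda>x. \<Sum>j\<in>S. c j * (g j x * g j0 x)) has_integral 0) {a..b}"
  proof (rule has_integral_eq[OF _ has_integral_0])
    fix x assume "x \<in> {a..b}"
    hence "(\<Sum>j\<in>S. c j * g j x) * g j0 x = 0" using z by simp
    thus "0 = (\<Sum>j\<in>S. c j * (g j x * g j0 x))" by (simp add: sum_distrib_right mult.assoc)
  qed
  hence "c j0 * nn = 0" using h has_integral_unique by blast
  thus ?thesis using nn by simp
qed


lemma trig_nat:
  fixes k l :: nat
  shows "cos (2 * pi * real k * real l) = 1" "sin (2 * pi * real k * real l) = 0"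
proof -
  have e: "2 * pi * real k * real l = real (2 * k * l) * pi" by simp
  show "cos (2 * pi * real k * real l) = 1" unfolding e cos_npi by simp
  show "sin (2 * pi * real k * real l) = 0" unfolding e by (rule sin_npi)
qed

lemma cos_stef: "st_eigenfunction m (\<lambda>i. real (len i)) V ((2*pi*real k)^2) (\<lambda>i x. cos (2*pi*real k*x))"
  unfolding st_eigenfunction_def
proof (intro exI[of _ "\<lambda>i x. - (2*pi*real k) * sin (2*pi*real k*x)"] conjI ballI)
  show "edge_ode m (\<lambda>i. real (len i)) ((2 * pi * real k)\<^sup>2) (\<lambda>i x. cos (2 * pi * real k * x))
     (\<lambda>i x. - (2 * pi * real k) * sin (2 * pi * real k * x))"
    unfolding edge_ode_def
    by (auto intro!: derivative_eq_intros simp: power2_eq_square)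
  have v: "ep_val (\<lambda>i. real (len i)) (\<lambda>i x. cos (2 * pi * real k * x)) p = 1" for p
    unfolding ep_val_def using trig_nat by simp
  have d: "ep_der (\<lambda>i. real (len i)) (\<lambda>i x. - (2 * pi * real k) * sin (2 * pi * real k * x)) p = 0" for p
    unfolding ep_der_def using trig_nat by simp
  fix v p q show "ep_val (\<lambda>i. real (len i)) (\<lambda>i x. cos (2 * pi * real k * x)) p =
       ep_val (\<lambda>i. real (len i)) (\<lambda>i x. cos (2 * pi * real k * x)) q" using v by simp
next
  fix v
  show "(\<Sum>p\<in>v. ep_der (\<lambda>i. real (len i)) (\<lambda>i x. - (2 * pi * real k) * sin (2 * pi * real k * x)) p) = 0"
    by (rule sum.neutral) (simp add: ep_der_def trig_nat)
qed

lemma cos_indep: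
  assumes m: "0 < m" and l0: "len 0 \<ge> 1"
  shows "lin_indep_on m (\<lambda>i. real (len i)) n (\<lambda>k i x. cos (2*pi*real k*x))"
  unfolding lin_indep_on_def
proof (intro allI impI)
  fix c :: "nat \<Rightarrow> real" and j0
  assume z: "\<forall>i<m. \<forall>x\<in>{0..real (len i)}. (\<Sum>j<n. c j * cos (2*pi*real j*x)) = 0" and j0: "j0 < n"
  show "c j0 = 0"
  proof (rule orth_indep[where g = "\<lambda>j x. cos (2*pi*real j*x)" and a = 0 and b = 1 and S = "{..<n}"
        and nn = "if j0 = 0 then 1 else 1/2"])
    fix x :: real assume "x \<in> {0..1}"
    hence "x \<in> {0..real (len 0)}" using l0 by auto
    thus "(\<Sum>j<n. c j * cos (2*pi*real j*x)) = 0" using z m by blast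
  next
    fix j assume "j \<in> {..<n}"
    show "((\<lambda>x. cos (2*pi*real j*x) * cos (2*pi*real j0*x)) has_integral
         (if j = j0 then if j0 = 0 then 1 else 1 / 2 else 0)) {0..1}"
      using cos_orth[of j j0] by (cases "j = j0") auto
  qed (use j0 in auto)
qed

lemma dir_nonpos_zero:
  assumes d: "dir_eigenfunction m L mu f" and mu: "mu \<le> 0" and i: "i < m" and Li: "L i > 0"
    and x: "x \<in> {0..L i}"
  shows "f i x = 0"
proof -
  obtain f' where o: "edge_ode m L mu f f'" and b: "\<forall>i<m. f i 0 = 0 \<and> f i (L i) = 0"
    using d unfolding dir_eigenfunction_def by blast
  have e: "eode (L i) mu (f i) (f' i)" using o i unfolding edge_ode_eode by blast
  have b0: "f i 0 = 0" "f i (L i) = 0" using b i by auto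
  have xL: "L i \<in> {0..L i}" using Li by simp
  have "f' i 0 = 0"
  proof (cases "mu = 0")
    case True
    have "f i (L i) = f i 0 + f' i 0 * L i" using eode_zero(2)[OF e[unfolded True] xL] .
    thus ?thesis using b0 Li by simp
  next
    case False
    hence mu': "mu < 0" using mu by simp
    define k where "k = sqrt (- mu)"
    have k: "k > 0" using mu' unfolding k_def by simp
    have A: "f' i (L i) * exp (- (k * L i)) = f' i 0" using eode_neg(1)[OF e mu' xL] b0 unfolding k_def by simp
    have B: "f' i (L i) * exp (k * L i) = f' i 0" using eode_neg(2)[OF e mu' xL] b0 unfolding k_def by simp
    have "exp (- (k * L i)) < exp (k * L i)" using k Li by simp
    hence "f' i (L i) = 0" using A B by (metis mult_cancel_left order_less_irrefl)
    thus ?thesis using A by simp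
  qed
  thus ?thesis using eode_vanish0[OF e _ b0(1) _ x] Li by simp
qed


lemma dir_family:
  assumes lenpos: "\<forall>i<m. len i > (0::nat)" and N: "N = (\<Sum>i<m. len i)" and t: "t \<ge> pi^2"
  shows "\<exists>fs mu. (\<forall>j<N. mu j \<le> t \<and> dir_eigenfunction m (\<lambda>i. real (len i)) (mu j) (fs j))
           \<and> lin_indep_on m (\<lambda>i. real (len i)) N fs"
proof -
  define T where "T = Sigma {..<m} (\<lambda>i. {1..len i})"
  have fT: "finite T" unfolding T_def by simp
  have cT: "card T = N" unfolding T_def N by simp
  obtain h where h: "bij_betw h {0..<N} T" using ex_bij_betw_nat_finite[OF fT] cT by blast
  have hT: "fst (h j) < m \<and> 1 \<le> snd (h j) \<and> snd (h j) \<le> len (fst (h j))" if "j < N" for j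
  proof -
    have "h j \<in> T" by (rule bij_betw_apply[OF h]) (use that in simp)
    thus ?thesis unfolding T_def by (cases "h j") simp
  qed
  define om where "om j = pi * real (snd (h j)) / real (len (fst (h j)))" for j
  define fs where "fs j i x = (if i = fst (h j) then sin (om j * x) else 0)" for j i x
  define fs' where "fs' j i x = (if i = fst (h j) then om j * cos (om j * x) else 0)" for j i x
  define mu where "mu j = (om j)^2" for j
  have lp: "real (len (fst (h j))) > 0" if "j < N" for j using lenpos hT[OF that] by simp
  have mu_le: "mu j \<le> t" if j: "j < N" for j
  proof -
    have "om j \<le> pi" unfolding om_def using hT[OF j] lp[OF j]
      by (simp add: divide_le_eq mult_left_mono)
    moreover have "om j \<ge> 0" unfolding om_def by simp
    ultimately have "(om j)^2 \<le> pi^2" by (simp add: power_mono)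
    thus ?thesis unfolding mu_def using t by simp
  qed
  have dir: "dir_eigenfunction m (\<lambda>i. real (len i)) (mu j) (fs j)" if j: "j < N" for j
    unfolding dir_eigenfunction_def
  proof (intro exI[of _ "fs' j"] conjI allI impI)
    show "edge_ode m (\<lambda>i. real (len i)) (mu j) (fs j) (fs' j)"
      unfolding edge_ode_def
    proof (intro allI impI ballI)
      fix i x assume "i < m" "x \<in> {0..real (len i)}"
      show "(fs j i has_real_derivative fs' j i x) (at x within {0..real (len i)}) \<and>
          (fs' j i has_real_derivative - mu j * fs j i x) (at x within {0..real (len i)})"
      proof (cases "i = fst (h j)")
        case True
        have e1: "fs j i = (\<lambda>x. sin (om j * x))" "fs' j i = (\<lambda>x. om j * cos (om j * x))"
          unfolding fs_def fs'_def using True by auto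
        show ?thesis unfolding e1 mu_def
          by (auto intro!: derivative_eq_intros simp: power2_eq_square)
      next
        case False
        have e1: "fs j i = (\<lambda>x. 0)" "fs' j i = (\<lambda>x. 0)"
          unfolding fs_def fs'_def using False by auto
        show ?thesis unfolding e1 by (auto intro!: derivative_eq_intros)
      qed
    qed
  next
    fix i assume "i < m"
    show "fs j i 0 = 0" unfolding fs_def by simp
    have "om j * real (len (fst (h j))) = pi * real (snd (h j))" unfolding om_def using lp[OF j] by simp
    thus "fs j i (real (len i)) = 0" unfolding fs_def by simp
  qed
  have li: "lin_indep_on m (\<lambda>i. real (len i)) N fs"
    unfolding lin_indep_on_def
  proof (intro allI impI)
    fix c :: "nat \<Rightarrow> real" and j0
    assume z: "\<forall>i<m. \<forall>x\<in>{0..real (len i)}. (\<Sum>j<N. c j * fs j i x) = 0" and j0: "j0 < N"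
    define i0 where "i0 = fst (h j0)"
    define S where "S = {j \<in> {..<N}. fst (h j) = i0}"
    have i0: "i0 < m" unfolding i0_def using hT[OF j0] by simp
    have Li0: "real (len i0) > 0" using lp[OF j0] unfolding i0_def .
    define g where "g j x = sin (pi * real (snd (h j)) * x / real (len i0))" for j x
    show "c j0 = 0"
    proof (rule orth_indep[where g = g and a = 0 and b = "real (len i0)" and S = S and nn = "real (len i0) / 2"])
      fix x assume x: "x \<in> {0..real (len i0)}"
      have "(\<Sum>j\<in>S. c j * g j x) = (\<Sum>j\<in>{..<N}. if fst (h j) = i0 then c j * g j x else 0)"
        unfolding S_def by (rule sum.inter_filter) simp
      also have "\<dots> = (\<Sum>j<N. c j * fs j i0 x)"
      proof (rule sum.cong)
        fix j assume "j \<in> {..<N}"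
        thus "(if fst (h j) = i0 then c j * g j x else 0) = c j * fs j i0 x"
          unfolding fs_def g_def om_def by auto
      qed simp
      also have "\<dots> = 0" using z i0 x by blast
      finally show "(\<Sum>j\<in>S. c j * g j x) = 0" .
    next
      show "finite S" unfolding S_def by simp
      show "j0 \<in> S" unfolding S_def i0_def using j0 by simp
      show "real (len i0) / 2 \<noteq> 0" using Li0 by simp
    next
      fix j assume jS: "j \<in> S"
      hence j: "j < N" "fst (h j) = i0" unfolding S_def by auto
      have eq: "snd (h j) = snd (h j0) \<longleftrightarrow> j = j0"
      proof
        assume "snd (h j) = snd (h j0)"
        hence "h j = h j0" using j i0_def by (simp add: prod_eq_iff)
        thus "j = j0" using h j j0 unfolding bij_betw_def inj_on_def by auto
      qed simp
      show "((\<lambda>x. g j x * g j0 x) has_integral (if j = j0 then real (len i0) / 2 else 0)) {0..real (len i0)}"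
        using sin_orth[OF Li0, of "snd (h j)" "snd (h j0)"] hT[OF j(1)] hT[OF j0] eq
        unfolding g_def by (simp add: eq)
    qed
  qed
  show ?thesis using mu_le dir li by blast
qed


theorem mainTheorem16:
  fixes m :: nat and len :: "nat \<Rightarrow> nat" and V :: "(nat \<times> bool) set set"
  assumes "cycle_graph m (\<lambda>i. real (len i)) V"
    and "Gcd (len ` {..<m}) = 1"
    and "odd (\<Sum>i<m. len i)"
  shows "st_eigenvalue m (\<lambda>i. real (len i)) V ((\<Sum>i<m. len i) + 1)
           > dir_eigenvalue m (\<lambda>i. real (len i)) (\<Sum>i<m. len i)"
proof -
  define N where "N = (\<Sum>i<m. len i)"
  have oddN: "odd N" using assms(3) unfolding N_def .
  have Npos: "N \<ge> 1" using oddN by (cases N) auto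
  have mpos: "0 < m"
  proof (rule ccontr)
    assume "\<not> 0 < m" hence "m = 0" by simp
    thus False using oddN unfolding N_def by simp
  qed
  interpret cyc m "\<lambda>i. real (len i)" V using assms(1) mpos by unfold_locales
  have lenpos: "\<forall>i<m. len i > 0" using Lpos by simp
  have EN: "(\<Sum>i<m. real (len i)) = real N" unfolding N_def by simp
  define c0 where "c0 = (pi * real (N+1) / real N)^2"
  define Sst where "Sst = {t. \<exists>fs mu. (\<forall>j<N+1. mu j \<le> t \<and> st_eigenfunction m (\<lambda>i. real (len i)) V (mu j) (fs j))
      \<and> lin_indep_on m (\<lambda>i. real (len i)) (N+1) fs}"
  define SD where "SD = {t. \<exists>fs mu. (\<forall>j<N. mu j \<le> t \<and> dir_eigenfunction m (\<lambda>i. real (len i)) (mu j) (fs j))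
      \<and> lin_indep_on m (\<lambda>i. real (len i)) N fs}"
  have st_eq: "st_eigenvalue m (\<lambda>i. real (len i)) V (N + 1) = Inf Sst"
    unfolding st_eigenvalue_def Sst_def by simp
  have d_eq: "dir_eigenvalue m (\<lambda>i. real (len i)) N = Inf SD"
    unfolding dir_eigenvalue_def SD_def by simp
  have "(2*pi*real N)^2 \<in> Sst"
    unfolding Sst_def
  proof (intro CollectI exI conjI allI impI)
    fix j assume j: "j < N + 1"
    show "(2*pi*real j)^2 \<le> (2*pi*real N)^2" using j by (intro power_mono) auto
    show "st_eigenfunction m (\<lambda>i. real (len i)) V ((2*pi*real j)^2) (\<lambda>i x. cos (2*pi*real j*x))"
      by (rule cos_stef)
  next
    show "lin_indep_on m (\<lambda>i. real (len i)) (N + 1) (\<lambda>k i x. cos (2*pi*real k*x))"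
      using cos_indep[OF mpos] lenpos mpos by (simp add: Suc_le_eq)
  qed
  hence Sne: "Sst \<noteq> {}" by blast
  have low: "c0 \<le> t" if tS: "t \<in> Sst" for t
  proof -
    obtain fs mu where "\<forall>j<N+1. mu j \<le> t \<and> st_eigenfunction m (\<lambda>i. real (len i)) V (mu j) (fs j)"
      "lin_indep_on m (\<lambda>i. real (len i)) (N+1) fs" using tS unfolding Sst_def by blast
    thus ?thesis using st_lower[OF EN oddN] unfolding c0_def by blast
  qed
  have stb: "c0 \<le> Inf Sst" using Sne low by (rule cInf_greatest)
  have piD: "pi^2 \<in> SD" unfolding SD_def using dir_family[OF lenpos N_def, of "pi^2"] by simp
  have bdd: "bdd_below SD"
  proof (rule bdd_belowI)
    fix t assume "t \<in> SD"
    then obtain fs mu where fm: "\<forall>j<N. mu j \<le> t \<and> dir_eigenfunction m (\<lambda>i. real (len i)) (mu j) (fs j)"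
      "lin_indep_on m (\<lambda>i. real (len i)) N fs" unfolding SD_def by blast
    have j0: "0 < N" using Npos by simp
    have "mu 0 > 0"
    proof (rule ccontr)
      assume "\<not> mu 0 > 0"
      hence "mu 0 \<le> 0" by simp
      hence "\<forall>i<m. \<forall>x\<in>{0..real (len i)}. fs 0 i x = 0"
        using dir_nonpos_zero[of m "\<lambda>i. real (len i)" "mu 0" "fs 0"] fm(1) j0 lenpos by auto
      thus False using dep1[OF fm(2) j0] by blast
    qed
    thus "0 \<le> t" using fm(1) j0 by force
  qed
  have dle: "Inf SD \<le> pi^2" by (rule cInf_lower[OF piD bdd])
  have "pi < pi * real (N+1) / real N" using Npos by (simp add: field_simps)
  hence "pi^2 < c0" unfolding c0_def by (intro power_strict_mono) auto
  hence "Inf SD < Inf Sst" using dle stb by linarith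
  thus ?thesis using st_eq d_eq unfolding N_def by simp
qed


end
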